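(* Let $R$ be a ring and $S$ a multiplicatively closed subset of $R$ consisting of central regular elements. If $R$ is almost Armendariz, then the localization $S^{-1}R=\{u^{-1}a : u\in S, a\in R\}$ is almost Armendariz.
   Context: All rings are associative with identity. An element is regular if it is not a zero divisor (left or right). For a ring $R$, $P(R)$ denotes the prime radical of $R$ (the intersection of all prime ideals of $R$, equivalently the set of strongly nilpotent elements of $R$). A ring $R$ is called almost Armendariz if whenever $f(x)=\sum_{i=0}^m a_ix^i$ and $g(x)=\sum_{j=0}^n b_jx^j\in R[x]$ satisfy $f(x)g(x)=0$, then $a_ib_j\in P(R)$ for all $0\le i\le m$, $0\le j\le n$. *)

theory Defs
  imports Main
begin

definition two_sided_ideal :: "'a::ring_1 set \<Rightarrow> bool" where
  "two_sided_ideal I \<longleftrightarrow> 0 \<in> I \<and> (\<forall>x\<in>I. \<forall>y\<in>I. x - y \<in> I) \<and>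
     (\<forall>x\<in>I. \<forall>r. r * x \<in> I \<and> x * r \<in> I)"

definition prime_ideal_nc :: "'a::ring_1 set \<Rightarrow> bool" where
  "prime_ideal_nc P \<longleftrightarrow> two_sided_ideal P \<and> P \<noteq> UNIV \<and>
     (\<forall>a b. (\<forall>r. a * r * b \<in> P) \<longrightarrow> a \<in> P \<or> b \<in> P)"

definition prime_radical :: "'a::ring_1 set" where
  "prime_radical = \<Inter> {P. prime_ideal_nc P}"

text \<open>Polynomials f = sum a_i x^i (i \<le> m), g = sum b_j x^j (j \<le> n) are represented by
  their coefficient functions; f g = 0 means every coefficient
  sum_{i+j=k} a_i b_j of the product vanishes.\<close>
definition almost_armendariz :: "'a::ring_1 itself \<Rightarrow> bool" where
  "almost_armendariz (_::'a itself) \<longleftrightarrow>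
     (\<forall>(a::nat \<Rightarrow> 'a) (b::nat \<Rightarrow> 'a) (m::nat) (n::nat).
        (\<forall>i>m. a i = 0) \<longrightarrow> (\<forall>j>n. b j = 0) \<longrightarrow>
        (\<forall>k. (\<Sum>i\<le>k. a i * b (k - i)) = 0) \<longrightarrow>
        (\<forall>i\<le>m. \<forall>j\<le>n. a i * b j \<in> (prime_radical :: 'a set)))"

end

theory Submission
  imports Defs
begin

lemma prime_radical_mult_left:
  assumes "x \<in> (prime_radical :: 'b::ring_1 set)" shows "r * x \<in> prime_radical"
  using assms unfolding prime_radical_def prime_ideal_nc_def two_sided_ideal_def by blast

theorem proposition2p7:
  fixes S :: "'a::ring_1 set"
    and \<phi> :: "'a \<Rightarrow> 'b::ring_1"
  assumes S_one: "1 \<in> S"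
    and S_mult: "\<And>s t. s \<in> S \<Longrightarrow> t \<in> S \<Longrightarrow> s * t \<in> S"
    and S_central: "\<And>s r. s \<in> S \<Longrightarrow> s * r = r * s"
    and S_regular: "\<And>s r. s \<in> S \<Longrightarrow> s * r = 0 \<Longrightarrow> r = 0"
    and S_regular': "\<And>s r. s \<in> S \<Longrightarrow> r * s = 0 \<Longrightarrow> r = 0"
    and hom_add: "\<And>x y. \<phi> (x + y) = \<phi> x + \<phi> y"
    and hom_mult: "\<And>x y. \<phi> (x * y) = \<phi> x * \<phi> y"
    and hom_one: "\<phi> 1 = 1"
    and hom_inj: "inj \<phi>"
    and S_units: "\<And>s. s \<in> S \<Longrightarrow> \<exists>v. \<phi> s * v = 1 \<and> v * \<phi> s = 1"
    and loc_elems: "\<And>t. \<exists>u\<in>S. \<exists>a v. \<phi> u * v = 1 \<and> v * \<phi> u = 1 \<and> t = v * \<phi> a"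
    and R_aa: "almost_armendariz TYPE('a)"
  shows "almost_armendariz TYPE('b)"
proof -
  have phi0: "\<phi> 0 = 0"
  proof -
    have "\<phi> (0 + 0) = \<phi> 0 + \<phi> 0" by (rule hom_add)
    then show ?thesis by simp
  qed
  have phi_minus: "\<phi> (x - y) = \<phi> x - \<phi> y" for x y
  proof -
    have "\<phi> (x - y + y) = \<phi> (x - y) + \<phi> y" by (rule hom_add)
    then show ?thesis by (simp add: algebra_simps)
  qed
  have phi_sum: "\<phi> (sum f A) = (\<Sum>x\<in>A. \<phi> (f x))" if "finite A" for f and A :: "nat set"
    using that by (induction A rule: finite_induct) (simp_all add: phi0 hom_add)
  have cen: "\<phi> s * t = t * \<phi> s" if s: "s \<in> S" for s t
  proof -
    obtain u a v where u: "u \<in> S" "\<phi> u * v = 1" "v * \<phi> u = 1" "t = v * \<phi> a"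
      using loc_elems[of t] by blast
    have su: "\<phi> s * \<phi> u = \<phi> u * \<phi> s" using S_central[OF s, of u] hom_mult by metis
    have sa: "\<phi> s * \<phi> a = \<phi> a * \<phi> s" using S_central[OF s, of a] hom_mult by metis
    have "v * \<phi> s = v * \<phi> s * (\<phi> u * v)" using u by simp
    also have "\<dots> = v * (\<phi> s * \<phi> u) * v" by (simp add: mult.assoc)
    also have "\<dots> = (v * \<phi> u) * \<phi> s * v" using su by (simp add: mult.assoc)
    also have "\<dots> = \<phi> s * v" using u by simp
    finally have vs: "v * \<phi> s = \<phi> s * v" .
    have "\<phi> s * t = (\<phi> s * v) * \<phi> a" using u by (simp add: mult.assoc)
    also have "\<dots> = v * (\<phi> s * \<phi> a)" using vs by (metis mult.assoc)
    also have "\<dots> = t * \<phi> s" using u sa by (simp add: mult.assoc)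
    finally show ?thesis .
  qed
  have icen: "v * t = t * v" if "s \<in> S" "\<phi> s * v = 1" "v * \<phi> s = 1" for s v t
  proof -
    have "v * t = v * t * (\<phi> s * v)" using that by simp
    also have "\<dots> = v * (t * \<phi> s) * v" by (simp add: mult.assoc)
    also have "\<dots> = v * (\<phi> s * t) * v" using cen[OF that(1)] by simp
    also have "\<dots> = (v * \<phi> s) * t * v" by (simp add: mult.assoc)
    also have "\<dots> = t * v" using that by simp
    finally show ?thesis .
  qed
  have rad: "\<phi> x \<in> prime_radical" if x: "x \<in> (prime_radical :: 'a set)" for x
  proof -
    have "\<phi> x \<in> P" if P: "prime_ideal_nc P" for P :: "'b set"
    proof -
      define Q where "Q = {y. \<phi> y \<in> P}"
      have PI: "two_sided_ideal P" "P \<noteq> UNIV"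
        and Pp: "\<And>a b. (\<forall>r. a * r * b \<in> P) \<Longrightarrow> a \<in> P \<or> b \<in> P"
        using P unfolding prime_ideal_nc_def by blast+
      have P0: "0 \<in> P" and Pd: "\<And>x y. x \<in> P \<Longrightarrow> y \<in> P \<Longrightarrow> x - y \<in> P"
        and Pm: "\<And>x r. x \<in> P \<Longrightarrow> r * x \<in> P \<and> x * r \<in> P"
        using PI(1) unfolding two_sided_ideal_def by blast+
      have "two_sided_ideal Q"
        unfolding two_sided_ideal_def Q_def using P0 Pd Pm by (auto simp: phi0 phi_minus hom_mult)
      moreover have "Q \<noteq> UNIV"
      proof
        assume "Q = UNIV"
        then have "1 \<in> P" unfolding Q_def using hom_one by (metis UNIV_I mem_Collect_eq)
        then have "\<And>r. r \<in> P" using Pm[of 1] by force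
        then show False using PI(2) by blast
      qed
      moreover have "a \<in> Q \<or> b \<in> Q" if ab: "\<forall>r. a * r * b \<in> Q" for a b
      proof -
        have "\<phi> a * t * \<phi> b \<in> P" for t
        proof -
          obtain u c v where u: "u \<in> S" "\<phi> u * v = 1" "v * \<phi> u = 1" "t = v * \<phi> c"
            using loc_elems[of t] by blast
          have "\<phi> a * t * \<phi> b = v * \<phi> (a * c * b)"
            using u icen[OF u(1-3), of "\<phi> a"] by (metis hom_mult mult.assoc)
          moreover have "\<phi> (a * c * b) \<in> P" using ab unfolding Q_def by blast
          ultimately show ?thesis using Pm by simp
        qed
        then show ?thesis using Pp unfolding Q_def by blast
      qed
      ultimately have "prime_ideal_nc Q" unfolding prime_ideal_nc_def by blast
      then have "x \<in> Q" using x unfolding prime_radical_def by blast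
      then show ?thesis unfolding Q_def by simp
    qed
    then show ?thesis unfolding prime_radical_def by blast
  qed
  have denom: "\<exists>u\<in>S. \<forall>i\<le>m. \<exists>\<alpha>. \<phi> u * a i = \<phi> \<alpha>" for m and a :: "nat \<Rightarrow> 'b"
  proof (induction m)
    case 0
    obtain u c v where u: "u \<in> S" "\<phi> u * v = 1" "v * \<phi> u = 1" "a 0 = v * \<phi> c"
      using loc_elems[of "a 0"] by blast
    have "\<phi> u * a 0 = \<phi> c" using u by (simp add: mult.assoc[symmetric])
    then show ?case using u(1) by auto
  next
    case (Suc m)
    then obtain u where u: "u \<in> S" "\<forall>i\<le>m. \<exists>\<alpha>. \<phi> u * a i = \<phi> \<alpha>" by blast
    obtain u' c v where u': "u' \<in> S" "\<phi> u' * v = 1" "v * \<phi> u' = 1" "a (Suc m) = v * \<phi> c"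
      using loc_elems[of "a (Suc m)"] by blast
    have "\<exists>\<alpha>. \<phi> (u * u') * a i = \<phi> \<alpha>" if i: "i \<le> Suc m" for i
    proof (cases "i = Suc m")
      case True
      have "\<phi> (u * u') * a i = \<phi> u * (\<phi> u' * v) * \<phi> c"
        using True u' by (metis hom_mult mult.assoc)
      also have "\<dots> = \<phi> (u * c)" using u' by (metis hom_mult mult_1_right)
      finally show ?thesis by blast
    next
      case False
      then obtain \<alpha> where "\<phi> u * a i = \<phi> \<alpha>" using u i by fastforce
      moreover have "\<phi> (u * u') = \<phi> u' * \<phi> u" using S_central[OF u(1), of u'] hom_mult by metis
      ultimately have "\<phi> (u * u') * a i = \<phi> (u' * \<alpha>)" by (simp add: hom_mult mult.assoc)
      then show ?thesis by blast
    qed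
    then show ?case using S_mult[OF u(1) u'(1)] by blast
  qed
  show ?thesis unfolding almost_armendariz_def
  proof (rule allI, rule allI, rule allI, rule allI, intro impI)
    fix a b :: "nat \<Rightarrow> 'b" and m n :: nat
    assume az: "\<forall>i>m. a i = 0" and bz: "\<forall>j>n. b j = 0"
      and prod0: "\<forall>k. (\<Sum>i\<le>k. a i * b (k - i)) = 0"
    obtain u where u: "u \<in> S" "\<forall>i\<le>m. \<exists>\<alpha>. \<phi> u * a i = \<phi> \<alpha>" using denom by blast
    obtain w where w: "w \<in> S" "\<forall>j\<le>n. \<exists>\<beta>. \<phi> w * b j = \<phi> \<beta>" using denom by blast
    define \<alpha> where "\<alpha> i = (if i \<le> m then (SOME x. \<phi> u * a i = \<phi> x) else 0)" for i
    define \<beta> where "\<beta> j = (if j \<le> n then (SOME x. \<phi> w * b j = \<phi> x) else 0)" for j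
    have al: "\<phi> (\<alpha> i) = \<phi> u * a i" for i
    proof (cases "i \<le> m")
      case True then show ?thesis unfolding \<alpha>_def using u(2) someI_ex[of "\<lambda>x. \<phi> u * a i = \<phi> x"] by auto
    next
      case False then show ?thesis unfolding \<alpha>_def using az phi0 by auto
    qed
    have be: "\<phi> (\<beta> j) = \<phi> w * b j" for j
    proof (cases "j \<le> n")
      case True then show ?thesis unfolding \<beta>_def using w(2) someI_ex[of "\<lambda>x. \<phi> w * b j = \<phi> x"] by auto
    next
      case False then show ?thesis unfolding \<beta>_def using bz phi0 by auto
    qed
    have key: "\<phi> (\<alpha> i * \<beta> j) = \<phi> u * \<phi> w * (a i * b j)" for i j
    proof -
      have "\<phi> (\<alpha> i * \<beta> j) = \<phi> u * (a i * \<phi> w) * b j" by (simp add: hom_mult al be mult.assoc)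
      also have "\<dots> = \<phi> u * \<phi> w * (a i * b j)" using cen[OF w(1), of "a i"] by (metis mult.assoc)
      finally show ?thesis .
    qed
    have "\<forall>i>m. \<alpha> i = 0" unfolding \<alpha>_def by simp
    moreover have "\<forall>j>n. \<beta> j = 0" unfolding \<beta>_def by simp
    moreover have "\<forall>k. (\<Sum>i\<le>k. \<alpha> i * \<beta> (k - i)) = 0"
    proof
      fix k
      have "\<phi> (\<Sum>i\<le>k. \<alpha> i * \<beta> (k - i)) = (\<Sum>i\<le>k. \<phi> u * \<phi> w * (a i * b (k - i)))"
        by (simp add: phi_sum key)
      also have "\<dots> = \<phi> u * \<phi> w * (\<Sum>i\<le>k. a i * b (k - i))" by (simp add: sum_distrib_left)
      also have "\<dots> = \<phi> 0" using prod0 phi0 by simp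
      finally show "(\<Sum>i\<le>k. \<alpha> i * \<beta> (k - i)) = 0" using hom_inj by (simp add: inj_eq)
    qed
    ultimately have inrad: "\<forall>i\<le>m. \<forall>j\<le>n. \<alpha> i * \<beta> j \<in> (prime_radical :: 'a set)"
      using R_aa unfolding almost_armendariz_def by blast
    show "\<forall>i\<le>m. \<forall>j\<le>n. a i * b j \<in> (prime_radical :: 'b set)"
    proof (intro allI impI)
      fix i j assume ij: "i \<le> m" "j \<le> n"
      obtain vu where vu: "\<phi> u * vu = 1" "vu * \<phi> u = 1" using S_units[OF u(1)] by blast
      obtain vw where vw: "\<phi> w * vw = 1" "vw * \<phi> w = 1" using S_units[OF w(1)] by blast
      have "\<phi> (\<alpha> i * \<beta> j) \<in> prime_radical" using rad inrad ij by blast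
      then have "(vw * vu) * \<phi> (\<alpha> i * \<beta> j) \<in> prime_radical" by (rule prime_radical_mult_left)
      moreover have "(vw * vu) * \<phi> (\<alpha> i * \<beta> j) = a i * b j"
      proof -
        have "(vw * vu) * \<phi> (\<alpha> i * \<beta> j) = vw * (vu * \<phi> u) * \<phi> w * (a i * b j)"
          by (simp add: key mult.assoc)
        also have "\<dots> = a i * b j" using vu vw by simp
        finally show ?thesis .
      qed
      ultimately show "a i * b j \<in> prime_radical" by simp
    qed
  qed
qed

end
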